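(* Let $\mathbf p,\mathbf q_1,\mathbf q_2,\mathbf r$ be words, $x$ a letter, and $\mathbf w=\mathbf px\mathbf q_1\mathbf q_2x\mathbf r$. If every letter occurring in $\mathbf q_1\mathbf q_2$ occurs at least twice in $\mathbf w$, then $\mathbf D_{15}$ satisfies the identity $\mathbf w\approx\mathbf px\mathbf q_1x\mathbf q_2x\mathbf r$.
   Context: Words are elements of the free monoid over a countably infinite alphabet; distinct symbols below are distinct letters. $\prod$ denotes concatenation in increasing index order; $\operatorname{var}\Sigma$ is the monoid variety defined by identities $\Sigma$. $S_N$ is the symmetric group on $\{1,\dots,N\}$, $i\tau$ the image of $i$. For $n,m,k\in\mathbb N$, $\tau\in S_{n+m+k}$: $\mathbf c_{n,m,k}[\tau]=\bigl(\prod_{i=1}^n z_it_i\bigr)xyt\bigl(\prod_{i=n+1}^{n+m} z_it_i\bigr)x\bigl(\prod_{i=1}^{n+m+k-1} z_{i\tau}y_i^2\bigr)z_{(n+m+k)\tau}y\bigl(\prod_{i=n+m+1}^{n+m+k} t_iz_i\bigr)$; $\mathbf c'_{n,m,k}[\tau]$ is obtained by swapping the first occurrences of $x$ and $y$; $\mathbf d_{n,m,k}[\tau]$, $\mathbf d'_{n,m,k}[\tau]$ are $\mathbf c_{n,m,k}[\tau]$, $\mathbf c'_{n,m,k}[\tau]$ read right to left. $\Phi_1$ is the set of all identities $\mathbf c_{n,m,k}[\tau]\approx\mathbf c'_{n,m,k}[\tau]$, $\mathbf d_{n,m,k}[\tau]\approx\mathbf d'_{n,m,k}[\tau]$. $\mathbf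 D_{15}=\operatorname{var}\{\Phi_1,\ xyx\approx x^2yx,\ xyx\approx xyx^2,\ (xy)^2\approx(yx)^2\}$. *)

theory Defs
  imports "HOL-Algebra.Group" "HOL-Combinatorics.Permutations"
begin

type_synonym word = "nat list"
type_synonym identity = "word \<times> word"

fun wval :: "('a, 'b) monoid_scheme \<Rightarrow> (nat \<Rightarrow> 'a) \<Rightarrow> word \<Rightarrow> 'a" where
  "wval M \<phi> [] = \<one>\<^bsub>M\<^esub>"
| "wval M \<phi> (a # w) = \<phi> a \<otimes>\<^bsub>M\<^esub> wval M \<phi> w"

definition sat_id :: "('a, 'b) monoid_scheme \<Rightarrow> identity \<Rightarrow> bool" where
  "sat_id M e \<longleftrightarrow> (\<forall>\<phi>. (\<forall>a. \<phi> a \<in> carrier M) \<longrightarrow> wval M \<phi> (fst e) = wval M \<phi> (snd e))"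

text \<open>Fixed distinct letters: x = 0, y = 1, t = 2, z_i = 3i, t_i = 3i+1, y_i = 3i+2 (i \<ge> 1).\<close>
definition lx :: nat where "lx = 0"
definition ly :: nat where "ly = 1"
definition lt :: nat where "lt = 2"
definition lz :: "nat \<Rightarrow> nat" where "lz i = 3 * i"
definition ltt :: "nat \<Rightarrow> nat" where "ltt i = 3 * i + 1"
definition lyy :: "nat \<Rightarrow> nat" where "lyy i = 3 * i + 2"

definition c_mid :: "nat \<Rightarrow> nat \<Rightarrow> nat \<Rightarrow> (nat \<Rightarrow> nat) \<Rightarrow> word" where
  "c_mid n m k \<tau> =
     [lt] @ concat (map (\<lambda>i. [lz i, ltt i]) [n+1..<n+m+1]) @ [lx]
     @ concat (map (\<lambda>i. [lz (\<tau> i), lyy i, lyy i]) [1..<n+m+k])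
     @ [lz (\<tau> (n+m+k)), ly]
     @ concat (map (\<lambda>i. [ltt i, lz i]) [n+m+1..<n+m+k+1])"

definition c_pre :: "nat \<Rightarrow> word" where
  "c_pre n = concat (map (\<lambda>i. [lz i, ltt i]) [1..<n+1])"

definition cw :: "nat \<Rightarrow> nat \<Rightarrow> nat \<Rightarrow> (nat \<Rightarrow> nat) \<Rightarrow> word" where
  "cw n m k \<tau> = c_pre n @ [lx, ly] @ c_mid n m k \<tau>"

definition cw' :: "nat \<Rightarrow> nat \<Rightarrow> nat \<Rightarrow> (nat \<Rightarrow> nat) \<Rightarrow> word" where
  "cw' n m k \<tau> = c_pre n @ [ly, lx] @ c_mid n m k \<tau>"

text \<open>Phi_1: all c \<approx> c' and d \<approx> d' (d = reversal of c); n+m+k \<ge> 1 so that the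
  letter z_{(n+m+k)\<tau>} is defined, \<tau> a permutation of {1..n+m+k}.\<close>
definition Phi1 :: "identity set" where
  "Phi1 = {e. \<exists>n m k \<tau>. 1 \<le> n + m + k \<and> \<tau> permutes {1..n+m+k} \<and>
      (e = (cw n m k \<tau>, cw' n m k \<tau>) \<or> e = (rev (cw n m k \<tau>), rev (cw' n m k \<tau>)))}"

definition D15_ids :: "identity set" where
  "D15_ids = Phi1 \<union>
     {([lx, ly, lx], [lx, lx, ly, lx]),
      ([lx, ly, lx], [lx, ly, lx, lx]),
      ([lx, ly, lx, ly], [ly, lx, ly, lx])}"

definition in_D15 :: "('a, 'b) monoid_scheme \<Rightarrow> bool" where
  "in_D15 M \<longleftrightarrow> monoid M \<and> (\<forall>e \<in> D15_ids. sat_id M e)"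

end

theory Submission
  imports Defs
begin

fun dbl :: "word \<Rightarrow> word" where
  "dbl [] = []"
| "dbl (c # l) = c # c # dbl l"

lemma count_dbl: "count_list (dbl l) a = 2 * count_list l a"
  by (induction l) auto

lemma dbl_append: "dbl (u @ v) = dbl u @ dbl v"
  by (induction u) auto

fun sqp :: "('a, 'b) monoid_scheme \<Rightarrow> 'a list \<Rightarrow> 'a" where
  "sqp M [] = \<one>\<^bsub>M\<^esub>"
| "sqp M (c # cs) = c \<otimes>\<^bsub>M\<^esub> (c \<otimes>\<^bsub>M\<^esub> sqp M cs)"

context monoid
begin

lemma wval_closed: "(\<forall>a. \<phi> a \<in> carrier G) \<Longrightarrow> wval G \<phi> w \<in> carrier G"
  by (induction w) auto

lemma wval_append:
  "(\<forall>a. \<phi> a \<in> carrier G) \<Longrightarrow> wval G \<phi> (u @ v) = wval G \<phi> u \<otimes> wval G \<phi> v"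
  by (induction u) (auto simp: m_assoc wval_closed)

lemma sqp_closed: "set cs \<subseteq> carrier G \<Longrightarrow> sqp G cs \<in> carrier G"
  by (induction cs) auto

lemma sqp_append: "set cs \<subseteq> carrier G \<Longrightarrow> set ds \<subseteq> carrier G \<Longrightarrow>
    sqp G (cs @ ds) = sqp G cs \<otimes> sqp G ds"
  by (induction cs) (auto simp: m_assoc sqp_closed)

lemma wval_dbl: "(\<forall>a. \<phi> a \<in> carrier G) \<Longrightarrow> wval G \<phi> (dbl l) = sqp G (map \<phi> l)"
  by (induction l) auto

lemma wval_sq_block:
  assumes "\<forall>j. \<psi> j \<in> carrier G" "\<forall>i. j \<le> i \<longrightarrow> \<psi> (lz i) = \<one>"
    "\<forall>k<length es. \<psi> (lyy (j+k)) = es!k"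
  shows "wval G \<psi> (concat (map (\<lambda>i. [lz i, lyy i, lyy i]) [j..<j+length es])) = sqp G es"
  using assms(2,3)
proof (induction es arbitrary: j)
  case Nil
  then show ?case by simp
next
  case (Cons e es)
  have u: "[j..<j + length (e # es)] = j # [Suc j..<Suc j + length es]"
    using upt_conv_Cons[of j "j + Suc (length es)"] by simp
  have h: "\<forall>k<length es. \<psi> (lyy (Suc j + k)) = es ! k"
    using Cons.prems(2) by (metis Suc_less_eq add_Suc add_Suc_right length_Cons nth_Cons_Suc)
  have ih: "wval G \<psi> (concat (map (\<lambda>i. [lz i, lyy i, lyy i]) [Suc j..<Suc j+length es])) = sqp G es"
    using Cons.IH[of "Suc j"] Cons.prems(1) h by (simp del: upt_Suc)
  have e: "\<psi> (lyy j) = e" using Cons.prems(2)[rule_format, of 0] by simp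
  have ec: "e \<in> carrier G" using e assms(1) by metis
  have sc: "sqp G es \<in> carrier G" using ih wval_closed assms(1) by metis
  show ?case unfolding u using ih e ec sc Cons.prems(1) assms(1) by (simp add: wval_closed del: upt_Suc)
qed

lemma wval_tail_block:
  assumes "\<forall>i\<in>set xs. \<psi> (ltt i) = \<one> \<and> \<psi> (lz i) = \<one>" "\<forall>j. \<psi> j \<in> carrier G"
  shows "wval G \<psi> (concat (map (\<lambda>i. [ltt i, lz i]) xs)) = \<one>"
  using assms by (induction xs) auto

end

lemma sat_idD: assumes "sat_id M e" "\<forall>a. \<phi> a \<in> carrier M"
  shows "wval M \<phi> (fst e) = wval M \<phi> (snd e)"
  using assms unfolding sat_id_def by blast

lemma memA: "([lx, ly, lx], [lx, lx, ly, lx]) \<in> D15_ids"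
  unfolding D15_ids_def by (rule UnI2) simp
lemma memB: "([lx, ly, lx], [lx, ly, lx, lx]) \<in> D15_ids"
  unfolding D15_ids_def by (rule UnI2) simp
lemma memC: "([lx, ly, lx, ly], [ly, lx, ly, lx]) \<in> D15_ids"
  unfolding D15_ids_def by (rule UnI2) simp

lemma memPsi: "(cw 0 0 (Suc n) id, cw' 0 0 (Suc n) id) \<in> D15_ids"
  unfolding D15_ids_def Phi1_def
  apply (rule UnI1)
  apply (rule CollectI)
  apply (rule exI[of _ 0], rule exI[of _ 0], rule exI[of _ "Suc n"], rule exI[of _ id])
  by simp

locale d15 = monoid +
  assumes ids: "\<forall>e\<in>D15_ids. sat_id G e"
begin

lemma idA: assumes "x \<in> carrier G" "y \<in> carrier G"
  shows "x \<otimes> (y \<otimes> x) = x \<otimes> (x \<otimes> (y \<otimes> x))"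
proof -
  have "sat_id G ([lx, ly, lx], [lx, lx, ly, lx])" by (rule ids[rule_format, OF memA])
  moreover have "\<forall>a. (\<lambda>j. if j = lx then x else y) a \<in> carrier G" using assms by auto
  ultimately have "wval G (\<lambda>j. if j = lx then x else y) (fst ([lx, ly, lx], [lx, lx, ly, lx])) = wval G (\<lambda>j. if j = lx then x else y) (snd ([lx, ly, lx], [lx, lx, ly, lx]))"
    by (rule sat_idD)
  then show ?thesis using assms by (simp add: lx_def ly_def)
qed

lemma idB: assumes "x \<in> carrier G" "y \<in> carrier G"
  shows "x \<otimes> (y \<otimes> x) = x \<otimes> (y \<otimes> (x \<otimes> x))"
proof -
  have "sat_id G ([lx, ly, lx], [lx, ly, lx, lx])" by (rule ids[rule_format, OF memB])
  moreover have "\<forall>a. (\<lambda>j. if j = lx then x else y) a \<in> carrier G" using assms by auto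
  ultimately have "wval G (\<lambda>j. if j = lx then x else y) (fst ([lx, ly, lx], [lx, ly, lx, lx])) = wval G (\<lambda>j. if j = lx then x else y) (snd ([lx, ly, lx], [lx, ly, lx, lx]))"
    by (rule sat_idD)
  then show ?thesis using assms by (simp add: lx_def ly_def)
qed

lemma idC: assumes "x \<in> carrier G" "y \<in> carrier G"
  shows "x \<otimes> (y \<otimes> (x \<otimes> y)) = y \<otimes> (x \<otimes> (y \<otimes> x))"
proof -
  have "sat_id G ([lx, ly, lx, ly], [ly, lx, ly, lx])" by (rule ids[rule_format, OF memC])
  moreover have "\<forall>a. (\<lambda>j. if j = lx then x else y) a \<in> carrier G" using assms by auto
  ultimately have "wval G (\<lambda>j. if j = lx then x else y) (fst ([lx, ly, lx, ly], [ly, lx, ly, lx])) = wval G (\<lambda>j. if j = lx then x else y) (snd ([lx, ly, lx, ly], [ly, lx, ly, lx]))"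
    by (rule sat_idD)
  then show ?thesis using assms by (simp add: lx_def ly_def)
qed

lemma psi:
  assumes a: "a \<in> carrier G" and x: "x \<in> carrier G" and ds: "set ds \<subseteq> carrier G"
  shows "a \<otimes> (x \<otimes> (a \<otimes> (sqp G ds \<otimes> x))) = x \<otimes> (a \<otimes> (a \<otimes> (sqp G ds \<otimes> x)))"
proof -
  define \<psi> where "\<psi> = (\<lambda>j::nat. if j = 0 then a else if j = 1 then x
     else if 5 \<le> j \<and> j mod 3 = 2 \<and> j div 3 \<le> length ds then ds ! (j div 3 - 1) else \<one>)"
  have pc: "\<forall>j. \<psi> j \<in> carrier G"
  proof
    fix j
    show "\<psi> j \<in> carrier G"
    proof (cases "5 \<le> j \<and> j mod 3 = 2 \<and> j div 3 \<le> length ds")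
      case True
      then have "j div 3 - 1 < length ds" by auto
      then have "ds ! (j div 3 - 1) \<in> carrier G" using ds nth_mem by blast
      then show ?thesis using a x by (simp add: \<psi>_def)
    next
      case False
      then show ?thesis using a x unfolding \<psi>_def by auto
    qed
  qed
  have p1: "\<psi> lx = a" "\<psi> ly = x" "\<psi> lt = \<one>" by (simp_all add: \<psi>_def lx_def ly_def lt_def)
  have p2: "\<forall>i. 1 \<le> i \<longrightarrow> \<psi> (lz i) = \<one>" by (auto simp: \<psi>_def lz_def)
  have p3: "\<forall>i\<in>set xs. \<psi> (ltt i) = \<one> \<and> \<psi> (lz i) = \<one>" if "\<forall>i\<in>set xs. 1 \<le> i" for xs
    using that p2 by (auto simp: \<psi>_def ltt_def)
  have p4: "\<forall>k<length ds. \<psi> (lyy (1+k)) = ds!k" by (auto simp: \<psi>_def lyy_def)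
  have blk: "wval G \<psi> (concat (map (\<lambda>i. [lz i, lyy i, lyy i]) [1..<Suc (length ds)])) = sqp G ds"
    using wval_sq_block[of \<psi> 1 ds] pc p2 p4 by simp
  have tl: "wval G \<psi> (concat (map (\<lambda>i. [ltt i, lz i]) [1..<Suc (Suc (length ds))])) = \<one>"
    by (rule wval_tail_block[OF p3 pc]) auto
  have lzN: "\<psi> (lz (Suc (length ds))) = \<one>" using p2 by simp
  have sc: "sqp G ds \<in> carrier G" using ds sqp_closed by blast
  have eq: "wval G \<psi> (cw 0 0 (Suc (length ds)) id) = wval G \<psi> (cw' 0 0 (Suc (length ds)) id)"
    using sat_idD[OF ids[rule_format, OF memPsi] pc] by simp
  have l: "wval G \<psi> (cw 0 0 (Suc (length ds)) id) = a \<otimes> (x \<otimes> (a \<otimes> (sqp G ds \<otimes> x)))"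
    unfolding cw_def c_mid_def c_pre_def using blk tl lzN p1 pc a x sc
    by (simp add: wval_append wval_closed m_assoc del: upt_Suc)
  have r: "wval G \<psi> (cw' 0 0 (Suc (length ds)) id) = x \<otimes> (a \<otimes> (a \<otimes> (sqp G ds \<otimes> x)))"
    unfolding cw'_def c_mid_def c_pre_def using blk tl lzN p1 pc a x sc
    by (simp add: wval_append wval_closed m_assoc del: upt_Suc)
  show ?thesis using eq l r by simp
qed

lemma At: assumes "x \<in> carrier G" "y \<in> carrier G" "z \<in> carrier G"
  shows "x \<otimes> (y \<otimes> (x \<otimes> z)) = x \<otimes> (x \<otimes> (y \<otimes> (x \<otimes> z)))"
proof -
  have "(x \<otimes> (y \<otimes> x)) \<otimes> z = (x \<otimes> (x \<otimes> (y \<otimes> x))) \<otimes> z" using idA assms by simp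
  then show ?thesis using assms by (simp add: m_assoc)
qed

lemma Bt: assumes "x \<in> carrier G" "y \<in> carrier G" "z \<in> carrier G"
  shows "x \<otimes> (y \<otimes> (x \<otimes> z)) = x \<otimes> (y \<otimes> (x \<otimes> (x \<otimes> z)))"
proof -
  have "(x \<otimes> (y \<otimes> x)) \<otimes> z = (x \<otimes> (y \<otimes> (x \<otimes> x))) \<otimes> z" using idB assms by simp
  then show ?thesis using assms by (simp add: m_assoc)
qed

lemma Ct: assumes "x \<in> carrier G" "y \<in> carrier G" "z \<in> carrier G"
  shows "x \<otimes> (y \<otimes> (x \<otimes> (y \<otimes> z))) = y \<otimes> (x \<otimes> (y \<otimes> (x \<otimes> z)))"
proof -
  have "(x \<otimes> (y \<otimes> (x \<otimes> y))) \<otimes> z = (y \<otimes> (x \<otimes> (y \<otimes> x))) \<otimes> z" using idC assms by simp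
  then show ?thesis using assms by (simp add: m_assoc)
qed

lemma Ht: assumes "a \<in> carrier G" "x \<in> carrier G" "z \<in> carrier G"
  shows "a \<otimes> (x \<otimes> (a \<otimes> (x \<otimes> z))) = x \<otimes> (a \<otimes> (a \<otimes> (x \<otimes> z)))"
proof -
  have "(a \<otimes> (x \<otimes> (a \<otimes> (sqp G [] \<otimes> x)))) \<otimes> z = (x \<otimes> (a \<otimes> (a \<otimes> (sqp G [] \<otimes> x)))) \<otimes> z"
    using psi[of a x "[]"] assms by simp
  then show ?thesis using assms by (simp add: m_assoc)
qed

lemma psit: assumes "a \<in> carrier G" "x \<in> carrier G" "set ds \<subseteq> carrier G" "z \<in> carrier G"
  shows "a \<otimes> (x \<otimes> (a \<otimes> (sqp G ds \<otimes> (x \<otimes> z)))) = x \<otimes> (a \<otimes> (a \<otimes> (sqp G ds \<otimes> (x \<otimes> z))))"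
proof -
  have sc: "sqp G ds \<in> carrier G" using assms sqp_closed by blast
  have "(a \<otimes> (x \<otimes> (a \<otimes> (sqp G ds \<otimes> x)))) \<otimes> z = (x \<otimes> (a \<otimes> (a \<otimes> (sqp G ds \<otimes> x)))) \<otimes> z"
    using psi[of a x ds] assms by simp
  then show ?thesis using assms sc by (simp add: m_assoc)
qed

lemma single: assumes a: "a \<in> carrier G" and x: "x \<in> carrier G" and ds: "set ds \<subseteq> carrier G"
  and R: "R \<in> carrier G"
  shows "x \<otimes> (a \<otimes> (a \<otimes> (sqp G ds \<otimes> (x \<otimes> R)))) = x \<otimes> (a \<otimes> (a \<otimes> (x \<otimes> (sqp G ds \<otimes> (x \<otimes> R)))))"
proof -
  define S where "S = sqp G ds"
  have S: "S \<in> carrier G" using ds sqp_closed S_def by blast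
  have "x \<otimes> (a \<otimes> (a \<otimes> (S \<otimes> (x \<otimes> R)))) = a \<otimes> (x \<otimes> (a \<otimes> (S \<otimes> (x \<otimes> R))))"
    using psit[OF a x ds R] S_def by simp
  also have "\<dots> = a \<otimes> (x \<otimes> (x \<otimes> (a \<otimes> (S \<otimes> (x \<otimes> R)))))"
  proof -
    have "x \<otimes> ((a \<otimes> S) \<otimes> (x \<otimes> R)) = x \<otimes> (x \<otimes> ((a \<otimes> S) \<otimes> (x \<otimes> R)))"
      using At[of x "a \<otimes> S" R] a x S R by simp
    then show ?thesis using a x S R by (simp add: m_assoc)
  qed
  also have "\<dots> = x \<otimes> (a \<otimes> (x \<otimes> (a \<otimes> (S \<otimes> (x \<otimes> R)))))"
    using Ht[of x a "S \<otimes> (x \<otimes> R)"] a x S R by simp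
  also have "\<dots> = a \<otimes> (x \<otimes> (a \<otimes> (x \<otimes> (S \<otimes> (x \<otimes> R)))))"
    using Ct[of x a "S \<otimes> (x \<otimes> R)"] a x S R by simp
  also have "\<dots> = x \<otimes> (a \<otimes> (a \<otimes> (x \<otimes> (S \<otimes> (x \<otimes> R)))))"
    using Ht[of a x "S \<otimes> (x \<otimes> R)"] a x S R by simp
  finally show ?thesis unfolding S_def .
qed

lemma core: assumes "set cs1 \<subseteq> carrier G" "set cs2 \<subseteq> carrier G" "x \<in> carrier G" "R \<in> carrier G"
  shows "x \<otimes> (sqp G cs1 \<otimes> (sqp G cs2 \<otimes> (x \<otimes> R))) =
         x \<otimes> (sqp G cs1 \<otimes> (x \<otimes> (sqp G cs2 \<otimes> (x \<otimes> R))))"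
  using assms(1)
proof (induction cs1)
  case Nil
  have "sqp G cs2 \<in> carrier G" using assms(2) sqp_closed by blast
  then show ?case using At[of x "sqp G cs2" R] assms by simp
next
  case (Cons a cs)
  have a: "a \<in> carrier G" and cs: "set cs \<subseteq> carrier G" using Cons.prems by auto
  have s1: "sqp G cs \<in> carrier G" using cs sqp_closed by blast
  have s2: "sqp G cs2 \<in> carrier G" using assms(2) sqp_closed by blast
  have x: "x \<in> carrier G" and R: "R \<in> carrier G" using assms by auto
  have ap: "sqp G (cs @ cs2) = sqp G cs \<otimes> sqp G cs2" using sqp_append cs assms(2) by blast
  have csc: "set (cs @ cs2) \<subseteq> carrier G" using cs assms(2) by auto
  have "x \<otimes> (sqp G (a # cs) \<otimes> (sqp G cs2 \<otimes> (x \<otimes> R))) = x \<otimes> (a \<otimes> (a \<otimes> (sqp G (cs @ cs2) \<otimes> (x \<otimes> R))))"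
    using a s1 s2 x R ap by (simp add: m_assoc)
  also have "\<dots> = x \<otimes> (a \<otimes> (a \<otimes> (x \<otimes> (sqp G (cs @ cs2) \<otimes> (x \<otimes> R)))))"
    using single[OF a x csc R] .
  also have "\<dots> = x \<otimes> (a \<otimes> (a \<otimes> (x \<otimes> (sqp G cs \<otimes> (sqp G cs2 \<otimes> (x \<otimes> R))))))"
    using a s1 s2 x R ap by (simp add: m_assoc)
  also have "\<dots> = x \<otimes> (a \<otimes> (a \<otimes> (x \<otimes> (sqp G cs \<otimes> (x \<otimes> (sqp G cs2 \<otimes> (x \<otimes> R)))))))"
    using Cons.IH[OF cs] by simp
  also have "\<dots> = x \<otimes> (a \<otimes> (a \<otimes> (sqp G cs \<otimes> (x \<otimes> (sqp G cs2 \<otimes> (x \<otimes> R))))))"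
    using single[OF a x cs, of "sqp G cs2 \<otimes> (x \<otimes> R)"] s2 x R by simp
  also have "\<dots> = x \<otimes> (sqp G (a # cs) \<otimes> (x \<otimes> (sqp G cs2 \<otimes> (x \<otimes> R))))"
    using a s1 s2 x R by (simp add: m_assoc)
  finally show ?case .
qed

lemma dup: assumes c: "\<forall>a. \<phi> a \<in> carrier G" and h: "b \<in> set u \<or> b \<in> set v"
  shows "wval G \<phi> (u @ b # v) = wval G \<phi> (u @ b # b # v)"
  using h
proof
  assume "b \<in> set u"
  then obtain u1 u2 where u: "u = u1 @ b # u2" using split_list by metis
  show ?thesis unfolding u using Bt[of "\<phi> b" "wval G \<phi> u2" "wval G \<phi> v"] c
    by (simp add: wval_append wval_closed m_assoc)
next
  assume "b \<in> set v"
  then obtain v1 v2 where v: "v = v1 @ b # v2" using split_list by metis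
  show ?thesis unfolding v using At[of "\<phi> b" "wval G \<phi> v1" "wval G \<phi> v2"] c
    by (simp add: wval_append wval_closed m_assoc)
qed

lemma sq: assumes c: "\<forall>a. \<phi> a \<in> carrier G"
  shows "\<forall>a\<in>set Q. 2 \<le> count_list (u @ Q @ v) a \<Longrightarrow> wval G \<phi> (u @ Q @ v) = wval G \<phi> (u @ dbl Q @ v)"
proof (induction Q arbitrary: u)
  case Nil
  then show ?case by simp
next
  case (Cons b Q)
  have "2 \<le> count_list (u @ b # Q @ v) b" using Cons.prems by simp
  then have "b \<in> set u \<or> b \<in> set (Q @ v)"
    by (cases "b \<in> set u"; cases "b \<in> set (Q @ v)") (auto simp: count_notin)
  then have "wval G \<phi> (u @ b # (Q @ v)) = wval G \<phi> (u @ b # b # (Q @ v))" using dup[OF c] by blast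
  also have "\<dots> = wval G \<phi> ((u @ [b, b]) @ Q @ v)" by simp
  also have "\<dots> = wval G \<phi> ((u @ [b, b]) @ dbl Q @ v)"
    by (rule Cons.IH) (use Cons.prems in auto)
  finally show ?case by simp
qed

end

theorem lemma6p3:
  fixes p q1 q2 r :: word and x :: nat and M :: "('a, 'b) monoid_scheme"
  assumes "in_D15 M"
    and "\<forall>a \<in> set (q1 @ q2). 2 \<le> count_list (p @ [x] @ q1 @ q2 @ [x] @ r) a"
  shows "sat_id M (p @ [x] @ q1 @ q2 @ [x] @ r, p @ [x] @ q1 @ [x] @ q2 @ [x] @ r)"
proof -
  have "d15 M" using assms(1) by (simp add: in_D15_def d15_def d15_axioms_def)
  then interpret d15 M .
  show ?thesis unfolding sat_id_def fst_conv snd_conv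
  proof (intro allI impI)
    fix \<phi> :: "nat \<Rightarrow> 'a" assume c: "\<forall>a. \<phi> a \<in> carrier M"
    have e1: "wval M \<phi> ((p @ [x]) @ (q1 @ q2) @ ([x] @ r)) = wval M \<phi> ((p @ [x]) @ dbl (q1 @ q2) @ ([x] @ r))"
      by (rule sq[OF c]) (use assms(2) in simp)
    have e2: "wval M \<phi> ((p @ [x]) @ q1 @ ([x] @ q2 @ [x] @ r)) = wval M \<phi> ((p @ [x]) @ dbl q1 @ ([x] @ q2 @ [x] @ r))"
      by (rule sq[OF c]) (use assms(2) in force)
    have e3: "wval M \<phi> ((p @ [x] @ dbl q1 @ [x]) @ q2 @ ([x] @ r)) = wval M \<phi> ((p @ [x] @ dbl q1 @ [x]) @ dbl q2 @ ([x] @ r))"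
      by (rule sq[OF c]) (use assms(2) in \<open>force simp: count_dbl\<close>)
    have pc: "wval M \<phi> p \<in> carrier M" "wval M \<phi> r \<in> carrier M" "\<phi> x \<in> carrier M"
      using c wval_closed by auto
    have m1: "set (map \<phi> q1) \<subseteq> carrier M" "set (map \<phi> q2) \<subseteq> carrier M" using c by auto
    have s: "sqp M (map \<phi> q1) \<in> carrier M" "sqp M (map \<phi> q2) \<in> carrier M" using m1 sqp_closed by auto
    have co: "\<phi> x \<otimes>\<^bsub>M\<^esub> (sqp M (map \<phi> q1) \<otimes>\<^bsub>M\<^esub> (sqp M (map \<phi> q2) \<otimes>\<^bsub>M\<^esub> (\<phi> x \<otimes>\<^bsub>M\<^esub> wval M \<phi> r))) =
         \<phi> x \<otimes>\<^bsub>M\<^esub> (sqp M (map \<phi> q1) \<otimes>\<^bsub>M\<^esub> (\<phi> x \<otimes>\<^bsub>M\<^esub> (sqp M (map \<phi> q2) \<otimes>\<^bsub>M\<^esub> (\<phi> x \<otimes>\<^bsub>M\<^esub> wval M \<phi> r))))"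
      using core[OF m1 pc(3) pc(2)] .
    have "wval M \<phi> (p @ [x] @ q1 @ q2 @ [x] @ r) = wval M \<phi> ((p @ [x]) @ dbl (q1 @ q2) @ ([x] @ r))"
      using e1 by simp
    also have "\<dots> = wval M \<phi> p \<otimes>\<^bsub>M\<^esub> (\<phi> x \<otimes>\<^bsub>M\<^esub> (sqp M (map \<phi> q1) \<otimes>\<^bsub>M\<^esub> (sqp M (map \<phi> q2) \<otimes>\<^bsub>M\<^esub> (\<phi> x \<otimes>\<^bsub>M\<^esub> wval M \<phi> r))))"
      using c pc s by (simp add: wval_append wval_closed wval_dbl dbl_append m_assoc)
    also have "\<dots> = wval M \<phi> p \<otimes>\<^bsub>M\<^esub> (\<phi> x \<otimes>\<^bsub>M\<^esub> (sqp M (map \<phi> q1) \<otimes>\<^bsub>M\<^esub> (\<phi> x \<otimes>\<^bsub>M\<^esub> (sqp M (map \<phi> q2) \<otimes>\<^bsub>M\<^esub> (\<phi> x \<otimes>\<^bsub>M\<^esub> wval M \<phi> r)))))"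
      using co by simp
    also have "\<dots> = wval M \<phi> ((p @ [x] @ dbl q1 @ [x]) @ dbl q2 @ ([x] @ r))"
      using c pc s by (simp add: wval_append wval_closed wval_dbl m_assoc)
    also have "\<dots> = wval M \<phi> (p @ [x] @ q1 @ [x] @ q2 @ [x] @ r)"
      using e2 e3 by simp
    finally show "wval M \<phi> (p @ [x] @ q1 @ q2 @ [x] @ r) = wval M \<phi> (p @ [x] @ q1 @ [x] @ q2 @ [x] @ r)" .
  qed
qed

end
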